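(* Let $L^{(k)}\subset\mathbb R^n$, $k\in\mathbb N$, be lattices such that the flat tori $\mathbb R^n/L^{(k)}$ have uniformly bounded diameter and $\mathrm{Vol}(\mathbb R^n/L^{(k)})\to0$ as $k\to\infty$. Then, after passing to a subsequence, there exist an integer $0\le m<n$ and, for each $k$, a $\mathbb Z$-basis $\{v^{(k)}_1,\dots,v^{(k)}_n\}$ of $L^{(k)}$ such that: (i) if $m\ge1$, the limits $w_j=\lim_{k\to\infty}v_j^{(k)}$ exist for $j=1,\dots,m$ and $w_1,\dots,w_m$ are linearly independent; (ii) $\lim_{k\to\infty}v^{(k)}_j=0$ for $j=m+1,\dots,n$.
   Context: A lattice in $\mathbb R^n$ is a discrete subgroup spanning $\mathbb R^n$; $\mathbb R^n/L$ carries the flat metric induced from the Euclidean metric, and its volume is the covolume of $L$. *)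

theory Defs
  imports "HOL-Analysis.Analysis"
begin

definition is_lattice :: "(real^'n) set \<Rightarrow> bool" where
  "is_lattice L \<longleftrightarrow>
     0 \<in> L \<and> (\<forall>x\<in>L. \<forall>y\<in>L. x + y \<in> L) \<and> (\<forall>x\<in>L. - x \<in> L) \<and>
     (\<exists>e>0. \<forall>x\<in>L. x \<noteq> 0 \<longrightarrow> e \<le> norm x) \<and>
     span L = UNIV"

text \<open>A Z-basis v_0,...,v_{n-1} of L (indices shifted by one w.r.t. the paper).\<close>
definition lattice_basis :: "(real^'n) set \<Rightarrow> (nat \<Rightarrow> real^'n) \<Rightarrow> bool" where
  "lattice_basis L b \<longleftrightarrow>
     inj_on b {..<CARD('n)} \<and> independent (b ` {..<CARD('n)}) \<and>
     L = {(\<Sum>j<CARD('n). of_int (c j) *\<^sub>R b j) | c. True}"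

definition torus_dist :: "(real^'n) set \<Rightarrow> real^'n \<Rightarrow> real^'n \<Rightarrow> real" where
  "torus_dist L x y = infdist (x - y) L"

definition torus_volume :: "(real^'n) set \<Rightarrow> real" where
  "torus_volume L =
     (let b = (SOME b. lattice_basis L b) in
      measure lebesgue {(\<Sum>j<CARD('n). t j *\<^sub>R b j) | t. \<forall>j<CARD('n). 0 \<le> t j \<and> t j < 1})"

end

theory Submission
  imports Defs
begin


definition perp :: "(real^'n) set \<Rightarrow> real^'n \<Rightarrow> real^'n" where
  "perp S x = x - (SOME y. y \<in> span S \<and> (\<forall>w\<in>span S. orthogonal (x - y) w))"

lemma perp_ex: fixes S :: "(real^'n) set"
  shows "\<exists>y. y \<in> span S \<and> (\<forall>w\<in>span S. orthogonal (x - y) w)"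
proof (rule orthogonal_subspace_decomp_exists[of S x])
  fix y z assume "y \<in> span S" "\<And>w. w \<in> span S \<Longrightarrow> orthogonal z w" "x = y + z"
  then show ?thesis by (intro exI[of _ y]) auto
qed

lemma perp_span: "x - perp S x \<in> span S"
  and perp_orth: "w \<in> span S \<Longrightarrow> orthogonal (perp S x) w"
proof -
  let ?y = "SOME y. y \<in> span S \<and> (\<forall>w\<in>span S. orthogonal (x - y) w)"
  have h: "?y \<in> span S \<and> (\<forall>w\<in>span S. orthogonal (x - ?y) w)"
    by (rule someI_ex[OF perp_ex[of S x]])
  show "x - perp S x \<in> span S" using h unfolding perp_def by simp
  show "w \<in> span S \<Longrightarrow> orthogonal (perp S x) w" using h unfolding perp_def by simp
qed

lemma perp_unique:
  assumes "y \<in> span S" "\<And>w. w \<in> span S \<Longrightarrow> orthogonal z w"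
  shows "perp S (y + z) = z"
proof -
  let ?p = "perp S (y + z)"
  have "z - ?p = ((y + z) - ?p) - y" by simp
  also have "\<dots> \<in> span S" by (rule span_diff[OF perp_span assms(1)])
  finally have sp: "z - ?p \<in> span S" .
  have "orthogonal (z - ?p) (z - ?p)"
    using assms(2)[OF sp] perp_orth[OF sp, of "y+z"]
    by (simp add: orthogonal_def inner_diff_left)
  then have "z - ?p = 0" by (simp add: orthogonal_def)
  then show ?thesis by simp
qed

lemma perp_self: "(\<And>w. w \<in> span S \<Longrightarrow> orthogonal z w) \<Longrightarrow> perp S z = z"
  using perp_unique[of 0 S z] by (simp add: span_zero)

lemma perp_in_span: "v \<in> span S \<Longrightarrow> perp S v = 0"
  using perp_unique[of v S 0] by (simp add: orthogonal_def)

lemma perp_add: "perp S (x + y) = perp S x + perp S y"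
proof -
  have "x + y = ((x - perp S x) + (y - perp S y)) + (perp S x + perp S y)" by simp
  moreover have "(x - perp S x) + (y - perp S y) \<in> span S"
    using perp_span span_add by blast
  moreover have "orthogonal (perp S x + perp S y) w" if "w \<in> span S" for w
    using perp_orth[OF that] by (simp add: orthogonal_def inner_add_left)
  ultimately show ?thesis using perp_unique[of "(x - perp S x) + (y - perp S y)" S "perp S x + perp S y"] by simp
qed

lemma perp_scale: "perp S (c *\<^sub>R x) = c *\<^sub>R perp S x"
proof -
  have "c *\<^sub>R x = c *\<^sub>R (x - perp S x) + c *\<^sub>R perp S x" by (simp add: algebra_simps)
  moreover have "c *\<^sub>R (x - perp S x) \<in> span S" using perp_span span_mul by blast
  moreover have "orthogonal (c *\<^sub>R perp S x) w" if "w \<in> span S" for w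
    using perp_orth[OF that] by (simp add: orthogonal_def)
  ultimately show ?thesis using perp_unique[of "c *\<^sub>R (x - perp S x)" S "c *\<^sub>R perp S x"] by simp
qed

lemma perp_minus: "perp S (- x) = - perp S x"
  using perp_scale[of S "-1" x] by simp

lemma perp_diff: "perp S (x - y) = perp S x - perp S y"
  using perp_add[of S x "-y"] perp_minus[of S y] by simp

lemma perp_add_span: "v \<in> span S \<Longrightarrow> perp S (x + v) = perp S x"
  by (simp add: perp_add perp_in_span)

lemma perp_diff_span: "v \<in> span S \<Longrightarrow> perp S (x - v) = perp S x"
  by (simp add: perp_diff perp_in_span)

lemma perp_zero_iff: "perp S x = 0 \<longleftrightarrow> x \<in> span S"
proof
  assume "perp S x = 0" then show "x \<in> span S" using perp_span[of x S] by simp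
qed (rule perp_in_span)

lemma norm_perp_le: "norm (perp S x) \<le> norm x"
proof -
  have o: "orthogonal (x - perp S x) (perp S x)"
    using perp_orth[OF perp_span] by (simp add: orthogonal_commute)
  have "(norm x)\<^sup>2 = (norm (x - perp S x))\<^sup>2 + (norm (perp S x))\<^sup>2"
    using norm_add_Pythagorean[OF o] by simp
  moreover have "0 \<le> (norm (x - perp S x))\<^sup>2" by (rule zero_le_power2)
  ultimately have "(norm (perp S x))\<^sup>2 \<le> (norm x)\<^sup>2" by linarith
  then show ?thesis by (rule power2_le_imp_le) simp
qed

lemma perp_mono_span: "span S \<subseteq> span T \<Longrightarrow> perp S (perp T x) = perp T x"
  by (rule perp_self) (use perp_orth in blast)

section \<open>Lattices\<close>

lemma lat_zero: "is_lattice L \<Longrightarrow> 0 \<in> L"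
  and lat_add: "is_lattice L \<Longrightarrow> x \<in> L \<Longrightarrow> y \<in> L \<Longrightarrow> x + y \<in> L"
  and lat_neg: "is_lattice L \<Longrightarrow> x \<in> L \<Longrightarrow> - x \<in> L"
  and lat_span: "is_lattice L \<Longrightarrow> span L = UNIV"
  unfolding is_lattice_def by auto

lemma lat_diff: "is_lattice L \<Longrightarrow> x \<in> L \<Longrightarrow> y \<in> L \<Longrightarrow> x - y \<in> L"
  using lat_add lat_neg by (metis diff_conv_add_uminus)

lemma lat_nat: "is_lattice L \<Longrightarrow> x \<in> L \<Longrightarrow> of_nat (k::nat) *\<^sub>R x \<in> L"
proof (induction k)
  case 0
  then show ?case by (simp add: lat_zero)
next
  case (Suc k)
  then have "x + of_nat k *\<^sub>R x \<in> L" using lat_add by blast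
  then show ?case by (simp add: scaleR_add_left add.commute)
qed

lemma lat_int: "is_lattice L \<Longrightarrow> x \<in> L \<Longrightarrow> of_int k *\<^sub>R x \<in> L"
proof (cases "k \<ge> 0")
  case True
  assume "is_lattice L" "x \<in> L"
  then show ?thesis using lat_nat[of L x "nat k"] True by simp
next
  case False
  assume "is_lattice L" "x \<in> L"
  then have "- (of_nat (nat (-k)) *\<^sub>R x) \<in> L" using lat_nat lat_neg by blast
  then show ?thesis using False by simp
qed

lemma lat_sum: "is_lattice L \<Longrightarrow> (\<And>l. l < (i::nat) \<Longrightarrow> b l \<in> L) \<Longrightarrow>
   (\<Sum>l<i. of_int (c l) *\<^sub>R b l) \<in> L"
proof (induction i)
  case 0
  then show ?case by (simp add: lat_zero)
next
  case (Suc i)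
  then show ?case by (simp add: lat_add lat_int)
qed

lemma lat_sep: "is_lattice L \<Longrightarrow> \<exists>e>0. \<forall>x\<in>L. x \<noteq> 0 \<longrightarrow> e \<le> norm x"
  unfolding is_lattice_def by auto

lemma lat_finite:
  assumes L: "is_lattice L"
  shows "finite (L \<inter> cball 0 R)"
proof (rule ccontr)
  assume inf: "infinite (L \<inter> cball 0 R)"
  obtain e where e: "e > 0" "\<forall>x\<in>L. x \<noteq> 0 \<longrightarrow> e \<le> norm x" using lat_sep[OF L] by blast
  obtain x where "x islimpt (L \<inter> cball 0 R)"
    using bounded_infinite_imp_islimpt[of "L \<inter> cball 0 R" "L \<inter> cball 0 R"] inf by auto
  then have ap: "\<And>d. d > 0 \<Longrightarrow> \<exists>y\<in>L \<inter> cball 0 R. y \<noteq> x \<and> dist y x < d"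
    by (simp add: islimpt_approachable)
  obtain y1 where y1: "y1 \<in> L" "y1 \<noteq> x" "dist y1 x < e/2" using ap[of "e/2"] e by auto
  obtain y2 where y2: "y2 \<in> L" "y2 \<noteq> x" "dist y2 x < dist y1 x" using ap[of "dist y1 x"] y1 by auto
  have "y1 - y2 \<in> L" using lat_diff[OF L] y1 y2 by auto
  moreover have "y1 - y2 \<noteq> 0" using y2 by auto
  moreover have "norm (y1 - y2) < e"
    using y1 y2 dist_triangle[of y1 y2 x] by (simp add: dist_norm dist_commute norm_minus_commute)
  ultimately have "e \<le> norm (y1 - y2)" using e(2) by blast
  then show False using \<open>norm (y1 - y2) < e\<close> by linarith
qed

lemma span_image_rep:
  "x \<in> span (f ` {..<i::nat}) \<Longrightarrow> \<exists>c. x = (\<Sum>l<i. c l *\<^sub>R f l)"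
proof (induction i arbitrary: x)
  case 0
  then show ?case by simp
next
  case (Suc i)
  have "f ` {..<Suc i} = insert (f i) (f ` {..<i})" by (simp add: lessThan_Suc)
  then obtain k where "x - k *\<^sub>R f i \<in> span (f ` {..<i})"
    using Suc.prems span_breakdown_eq by metis
  then obtain c where c: "x - k *\<^sub>R f i = (\<Sum>l<i. c l *\<^sub>R f l)" using Suc.IH by blast
  have "(\<Sum>l<Suc i. (c(i := k)) l *\<^sub>R f l) = (\<Sum>l<i. (c(i := k)) l *\<^sub>R f l) + (c(i := k)) i *\<^sub>R f i"
    by (rule sum.lessThan_Suc)
  also have "(\<Sum>l<i. (c(i := k)) l *\<^sub>R f l) = (\<Sum>l<i. c l *\<^sub>R f l)"
    by (rule sum.cong) auto
  finally have "x = (\<Sum>l<Suc i. (c(i := k)) l *\<^sub>R f l)"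
    using c by (simp add: algebra_simps)
  then show ?case by blast
qed

lemma sum_in_span: "(\<Sum>l<i. c l *\<^sub>R f l) \<in> span (f ` {..<i})"
  by (intro span_sum span_mul span_base) auto


definition gs :: "(nat \<Rightarrow> real^'n) \<Rightarrow> nat \<Rightarrow> real^'n" where
  "gs b i = perp (b ` {..<i}) (b i)"

definition good :: "(real^'n) set \<Rightarrow> (nat \<Rightarrow> real^'n) \<Rightarrow> nat \<Rightarrow> bool" where
  "good L b j \<longleftrightarrow> b j \<in> L \<and> b j \<notin> span (b ` {..<j}) \<and>
     (\<forall>x\<in>L. x \<notin> span (b ` {..<j}) \<longrightarrow> norm (gs b j) \<le> norm (perp (b ` {..<j}) x)) \<and>
     (\<exists>c. b j - gs b j = (\<Sum>l<j. c l *\<^sub>R b l) \<and> (\<forall>l<j. \<bar>c l\<bar> \<le> 1/2))"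

lemma good_cong:
  assumes "\<And>l. l \<le> j \<Longrightarrow> b' l = b l"
  shows "good L b' j = good L b j"
proof -
  have im: "b' ` {..<j} = b ` {..<j}" using assms by (intro image_cong) auto
  have s: "(\<Sum>l<j. c l *\<^sub>R b' l) = (\<Sum>l<j. c l *\<^sub>R b l)" for c
    using assms by (intro sum.cong) auto
  have "gs b' j = gs b j" unfolding gs_def im using assms by simp
  then show ?thesis unfolding good_def im s using assms[of j] by simp
qed

lemma reduce:
  fixes L :: "(real^'n) set" and i :: nat
  assumes L: "is_lattice L" and bL: "\<forall>l<i. b l \<in> L" and y: "y \<in> L"
  shows "\<exists>y'. y' \<in> L \<and> perp (b ` {..<i}) y' = perp (b ` {..<i}) y \<and>
     (\<exists>c. y' - perp (b ` {..<i}) y' = (\<Sum>l<i. c l *\<^sub>R b l) \<and> (\<forall>l<i. \<bar>c l\<bar> \<le> 1/2))"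
proof -
  let ?V = "b ` {..<i}"
  obtain c where c: "y - perp ?V y = (\<Sum>l<i. c l *\<^sub>R b l)"
    using span_image_rep[OF perp_span[of y ?V]] by blast
  define z where "z = (\<Sum>l<i. of_int (round (c l)) *\<^sub>R b l)"
  define y' where "y' = y - z"
  have zL: "z \<in> L" unfolding z_def using bL by (intro lat_sum[OF L]) auto
  have y'L: "y' \<in> L" unfolding y'_def using lat_diff[OF L y zL] .
  have zs: "z \<in> span ?V" unfolding z_def by (rule sum_in_span)
  have p: "perp ?V y' = perp ?V y" unfolding y'_def by (simp add: perp_diff_span[OF zs])
  have "y' - perp ?V y' = (y - perp ?V y) - z" by (subst p) (simp add: y'_def)
  also have "\<dots> = (\<Sum>l<i. (c l - of_int (round (c l))) *\<^sub>R b l)"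
    unfolding c z_def by (simp add: sum_subtractf scaleR_diff_left)
  finally have e: "y' - perp ?V y' = (\<Sum>l<i. (c l - of_int (round (c l))) *\<^sub>R b l)" .
  have "\<forall>l<i. \<bar>c l - of_int (round (c l))\<bar> \<le> 1/2"
    using of_int_round_abs_le by (metis abs_minus_commute)
  with e y'L p show ?thesis
    by (intro exI[of _ y'] conjI exI[of _ "\<lambda>l. c l - of_int (round (c l))"]) auto
qed

lemma norm_reduced:
  assumes "y - p = (\<Sum>l<i. c l *\<^sub>R b l)" "\<forall>l<i. \<bar>c l\<bar> \<le> 1/2"
  shows "norm y \<le> norm p + (\<Sum>l<i. norm (b l))"
proof -
  have "norm (y - p) \<le> (\<Sum>l<i. norm (c l *\<^sub>R b l))" unfolding assms(1) by (rule norm_sum)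
  also have "\<dots> \<le> (\<Sum>l<i. norm (b l))"
  proof (rule sum_mono)
    fix l assume "l \<in> {..<i}"
    then have "\<bar>c l\<bar> \<le> 1" using assms(2) by auto
    then show "norm (c l *\<^sub>R b l) \<le> norm (b l)"
      by (simp add: mult_left_le_one_le)
  qed
  finally have "norm (y - p) \<le> (\<Sum>l<i. norm (b l))" .
  moreover have "norm y \<le> norm p + norm (y - p)" using norm_triangle_ineq[of p "y - p"] by simp
  ultimately show ?thesis by linarith
qed

lemma dim_univ_cart: "dim (UNIV :: (real^'n) set) = CARD('n)"
  by (simp add: dim_UNIV)

lemma exists_outside:
  fixes b :: "nat \<Rightarrow> real^'n" and L :: "(real^'n) set"
  assumes L: "is_lattice L" and i: "i < CARD('n)"
  shows "\<exists>x\<in>L. x \<notin> span (b ` {..<i})"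
proof (rule ccontr)
  assume "\<not> ?thesis"
  then have "L \<subseteq> span (b ` {..<i})" by auto
  then have "UNIV \<subseteq> span (b ` {..<i})" using lat_span[OF L] span_mono span_span by metis
  then have "dim (UNIV :: (real^'n) set) \<le> card (b ` {..<i})" by (intro dim_le_card) auto
  also have "\<dots> \<le> i" using card_image_le[of "{..<i}" b] by simp
  finally show False using i dim_univ_cart by (metis not_le)
qed

lemma good_step:
  fixes L :: "(real^'n) set" and b :: "nat \<Rightarrow> real^'n"
  assumes L: "is_lattice L" and i: "i < CARD('n)" and G: "\<And>j. j < i \<Longrightarrow> good L b j"
  shows "\<exists>x. good L (b(i := x)) i"
proof -
  let ?V = "b ` {..<i}"
  let ?f = "\<lambda>z. norm (perp ?V z)"
  have bL: "\<forall>l<i. b l \<in> L" using G unfolding good_def by blast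
  obtain x1 where x1: "x1 \<in> L" "x1 \<notin> span ?V" using exists_outside[OF L i] by blast
  define R where "R = ?f x1"
  define M where "M = (\<Sum>l<i. norm (b l))"
  define T where "T = {z \<in> L \<inter> cball 0 (R + M). z \<notin> span ?V}"
  have fin: "finite T" unfolding T_def using lat_finite[OF L, of "R + M"] by (rule finite_subset[rotated]) auto
  have inT: "z \<in> T" if "z \<in> L" "perp ?V z = perp ?V y" "y \<notin> span ?V" "?f y \<le> R"
    "z - perp ?V z = (\<Sum>l<i. c l *\<^sub>R b l)" "\<forall>l<i. \<bar>c l\<bar> \<le> 1/2" for z y c
  proof -
    have "norm z \<le> ?f z + M" unfolding M_def by (rule norm_reduced[OF that(5,6)])
    then have "norm z \<le> R + M" using that(2,4) by simp
    moreover have "z \<notin> span ?V" using that(2,3) perp_zero_iff by metis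
    ultimately show ?thesis unfolding T_def using that(1) by auto
  qed
  obtain x1' c1 where x1': "x1' \<in> L" "perp ?V x1' = perp ?V x1"
      "x1' - perp ?V x1' = (\<Sum>l<i. c1 l *\<^sub>R b l)" "\<forall>l<i. \<bar>c1 l\<bar> \<le> 1/2"
    using reduce[OF L bL x1(1)] by blast
  have x1T: "x1' \<in> T" using inT[OF x1'(1,2) x1(2) _ x1'(3,4)] unfolding R_def by simp
  obtain m where m: "m \<in> ?f ` T" "\<not> (\<exists>u\<in>?f ` T. u < m)"
    using ex_min_if_finite[of "?f ` T"] fin x1T by blast
  then obtain x0 where x0: "x0 \<in> T" "m = ?f x0" by blast
  have x0min: "\<And>z. z \<in> T \<Longrightarrow> ?f x0 \<le> ?f z" using m x0 by (metis image_eqI not_le)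
  have x0L: "x0 \<in> L" "x0 \<notin> span ?V" using x0 unfolding T_def by auto
  obtain x c where x: "x \<in> L" "perp ?V x = perp ?V x0"
      "x - perp ?V x = (\<Sum>l<i. c l *\<^sub>R b l)" "\<forall>l<i. \<bar>c l\<bar> \<le> 1/2"
    using reduce[OF L bL x0L(1)] by blast
  let ?b = "b(i := x)"
  have im: "?b ` {..<i} = ?V" by (intro image_cong) auto
  have s: "(\<Sum>l<i. c l *\<^sub>R ?b l) = (\<Sum>l<i. c l *\<^sub>R b l)" by (intro sum.cong) auto
  have gsb: "gs ?b i = perp ?V x" unfolding gs_def im by simp
  have xV: "x \<notin> span ?V" using x(2) x0L(2) perp_zero_iff by metis
  have mini: "norm (perp ?V x) \<le> norm (perp ?V y)" if yL: "y \<in> L" and yV: "y \<notin> span ?V" for y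
  proof (cases "?f y \<le> R")
    case True
    obtain y' c' where y': "y' \<in> L" "perp ?V y' = perp ?V y"
        "y' - perp ?V y' = (\<Sum>l<i. c' l *\<^sub>R b l)" "\<forall>l<i. \<bar>c' l\<bar> \<le> 1/2"
      using reduce[OF L bL yL] by blast
    have "y' \<in> T" using inT[OF y'(1,2) yV True y'(3,4)] .
    then have "?f x0 \<le> ?f y'" by (rule x0min)
    then show ?thesis using x(2) y'(2) by simp
  next
    case False
    have "?f x0 \<le> ?f x1'" by (rule x0min[OF x1T])
    then show ?thesis using x(2) x1'(2) False unfolding R_def by simp
  qed
  have "good L ?b i"
    unfolding good_def im gsb s
    using x xV mini by auto
  then show ?thesis by blast
qed

lemma exists_good:
  fixes L :: "(real^'n) set"
  assumes L: "is_lattice L"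
  shows "\<exists>b::nat \<Rightarrow> real^'n. \<forall>j<CARD('n). good L b j"
proof -
  have "i \<le> CARD('n) \<Longrightarrow> \<exists>b::nat \<Rightarrow> real^'n. \<forall>j<i. good L b j" for i
  proof (induction i)
    case 0
    then show ?case by simp
  next
    case (Suc i)
    then obtain b :: "nat \<Rightarrow> real^'n" where b: "\<forall>j<i. good L b j" by auto
    obtain x where x: "good L (b(i := x)) i" using good_step[OF L _ ] b Suc.prems by (meson Suc_le_lessD)
    have "\<forall>j<Suc i. good L (b(i := x)) j"
    proof (intro allI impI)
      fix j assume "j < Suc i"
      then consider "j < i" | "j = i" by linarith
      then show "good L (b(i := x)) j"
      proof cases
        case 1
        then have "good L (b(i := x)) j = good L b j" by (intro good_cong) auto
        then show ?thesis using b 1 by simp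
      qed (use x in simp)
    qed
    then show ?case by blast
  qed
  then show ?thesis by blast
qed


lemma TI_ind:
  fixes a i :: nat
  assumes "\<And>j. a \<le> j \<Longrightarrow> j < i \<Longrightarrow> f j \<notin> span (f ` {a..<j})"
  shows "independent (f ` {a..<i}) \<and> inj_on f {a..<i}"
  using assms
proof (induction i)
  case 0
  then show ?case by (simp add: independent_empty)
next
  case (Suc i)
  have IH: "independent (f ` {a..<i}) \<and> inj_on f {a..<i}" using Suc by auto
  show ?case
  proof (cases "a \<le> i")
    case False
    then have "{a..<Suc i} = {}" by auto
    then show ?thesis by (simp add: independent_empty)
  next
    case True
    then have eq: "{a..<Suc i} = insert i {a..<i}" by auto
    have ni: "f i \<notin> span (f ` {a..<i})" by (rule Suc.prems) (use True in simp_all)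
    have ni2: "f i \<notin> f ` {a..<i}"
    proof
      assume "f i \<in> f ` {a..<i}"
      then have "f i \<in> span (f ` {a..<i})" by (rule span_base)
      then show False using ni by contradiction
    qed
    have "independent (insert (f i) (f ` {a..<i}))"
      by (rule independent_insertI[OF ni]) (use IH in blast)
    moreover have "inj_on f (insert i {a..<i})"
      using IH ni2 by (simp add: inj_on_insert)
    ultimately show ?thesis unfolding eq by simp
  qed
qed

fun Kc :: "nat \<Rightarrow> real" where
  "Kc 0 = 1"
| "Kc (Suc i) = 1 + 2 * real (Suc i) * Kc i"

lemma Kc_ge1: "1 \<le> Kc i"
  by (induction i) auto

context
  fixes L :: "(real^'n) set" and b :: "nat \<Rightarrow> real^'n"
  assumes L: "is_lattice L" and G: "\<And>j. j < CARD('n) \<Longrightarrow> good L b j"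
begin

lemma gb_L: "j < CARD('n) \<Longrightarrow> b j \<in> L"
  and gb_TI: "j < CARD('n) \<Longrightarrow> b j \<notin> span (b ` {..<j})"
  and gb_min: "j < CARD('n) \<Longrightarrow> x \<in> L \<Longrightarrow> x \<notin> span (b ` {..<j}) \<Longrightarrow> norm (gs b j) \<le> norm (perp (b ` {..<j}) x)"
  and gb_red: "j < CARD('n) \<Longrightarrow> \<exists>c. b j - gs b j = (\<Sum>l<j. c l *\<^sub>R b l) \<and> (\<forall>l<j. \<bar>c l\<bar> \<le> 1/2)"
  using G[of j] unfolding good_def by auto

lemma gb_indep: "independent (b ` {..<CARD('n)}) \<and> inj_on b {..<CARD('n)}"
  using TI_ind[of 0 "CARD('n)" b] gb_TI by (simp add: lessThan_atLeast0)

lemma gb_span: "span (b ` {..<CARD('n)}) = UNIV"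
proof -
  have c: "card (b ` {..<CARD('n)}) = CARD('n)" using gb_indep by (simp add: card_image)
  have "UNIV \<subseteq> span (b ` {..<CARD('n)})"
    using card_eq_dim[of "b ` {..<CARD('n)}" UNIV] gb_indep c by (simp add: dim_UNIV)
  then show ?thesis by auto
qed

lemma gb_zspan:
  assumes "i \<le> CARD('n)" "x \<in> L" "x \<in> span (b ` {..<i})"
  shows "\<exists>c. x = (\<Sum>l<i. of_int (c l) *\<^sub>R b l)"
  using assms
proof (induction i arbitrary: x)
  case 0
  then show ?case by simp
next
  case (Suc i)
  let ?V = "b ` {..<i}"
  have i: "i < CARD('n)" using Suc.prems by simp
  have "b ` {..<Suc i} = insert (b i) ?V" by (simp add: lessThan_Suc)
  then obtain t where t: "x - t *\<^sub>R b i \<in> span ?V"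
    using Suc.prems(3) span_breakdown_eq by metis
  have px: "perp ?V x = t *\<^sub>R gs b i"
  proof -
    have "perp ?V x = perp ?V ((x - t *\<^sub>R b i) + t *\<^sub>R b i)" by simp
    also have "\<dots> = perp ?V (t *\<^sub>R b i)" by (simp only: add.commute[of "x - _"] perp_add_span[OF t])
    finally show ?thesis by (simp add: perp_scale gs_def)
  qed
  have s0: "gs b i \<noteq> 0" using gb_TI[OF i] perp_zero_iff unfolding gs_def by metis
  have biL: "b i \<in> L" by (rule gb_L[OF i])
  show ?case
  proof (cases "t \<in> \<int>")
    case True
    then obtain k where k: "t = of_int k" by (auto elim: Ints_cases)
    have "x - of_int k *\<^sub>R b i \<in> L" using lat_diff[OF L Suc.prems(2) lat_int[OF L biL]] .
    then obtain c where c: "x - of_int k *\<^sub>R b i = (\<Sum>l<i. of_int (c l) *\<^sub>R b l)"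
      using Suc.IH[of "x - of_int k *\<^sub>R b i"] Suc.prems t k by auto
    have "(\<Sum>l<Suc i. of_int ((c(i := k)) l) *\<^sub>R b l)
        = (\<Sum>l<i. of_int ((c(i := k)) l) *\<^sub>R b l) + of_int ((c(i := k)) i) *\<^sub>R b i"
      by (rule sum.lessThan_Suc)
    also have "(\<Sum>l<i. of_int ((c(i := k)) l) *\<^sub>R b l) = (\<Sum>l<i. of_int (c l) *\<^sub>R b l)"
      by (rule sum.cong) auto
    finally have "x = (\<Sum>l<Suc i. of_int ((c(i := k)) l) *\<^sub>R b l)"
      using c by (simp add: algebra_simps)
    then show ?thesis by blast
  next
    case False
    define x' where "x' = x - of_int (floor t) *\<^sub>R b i"
    define fr where "fr = t - of_int (floor t)"
    have x'L: "x' \<in> L" unfolding x'_def using lat_diff[OF L Suc.prems(2) lat_int[OF L biL]] .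
    have "perp ?V x' = perp ?V x - of_int (floor t) *\<^sub>R gs b i"
      unfolding x'_def by (simp add: perp_diff perp_scale gs_def)
    then have px': "perp ?V x' = fr *\<^sub>R gs b i" unfolding px fr_def by (simp add: scaleR_diff_left)
    have fr0: "fr \<noteq> 0" using False unfolding fr_def by (metis Ints_of_int eq_iff_diff_eq_0)
    have fr1: "0 \<le> fr" "fr < 1" unfolding fr_def by linarith+
    have "perp ?V x' \<noteq> 0" using px' fr0 s0 by simp
    then have "x' \<notin> span ?V" using perp_zero_iff by metis
    then have "norm (gs b i) \<le> norm (perp ?V x')" by (rule gb_min[OF i x'L])
    also have "\<dots> = fr * norm (gs b i)" using px' fr1 by simp
    also have "\<dots> < norm (gs b i)" using fr1 s0 by simp
    finally show ?thesis by simp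
  qed
qed

lemma gb_basis: "lattice_basis L b"
proof -
  have "L = {(\<Sum>j<CARD('n). of_int (c j) *\<^sub>R b j) | c. True}"
  proof
    show "L \<subseteq> {(\<Sum>j<CARD('n). of_int (c j) *\<^sub>R b j) | c. True}"
      using gb_zspan[of "CARD('n)"] gb_span by auto
    show "{(\<Sum>j<CARD('n). of_int (c j) *\<^sub>R b j) | c. True} \<subseteq> L"
      using lat_sum[OF L] gb_L by auto
  qed
  then show ?thesis unfolding lattice_basis_def using gb_indep by auto
qed

lemma gb_shortest: "x \<in> L \<Longrightarrow> x \<noteq> 0 \<Longrightarrow> norm (b 0) \<le> norm x"
proof -
  assume x: "x \<in> L" "x \<noteq> 0"
  have p: "perp {} z = z" for z :: "real^'n" by (rule perp_self) (simp add: orthogonal_def)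
  have "x \<notin> span (b ` {..<0})" using x by simp
  then have "norm (gs b 0) \<le> norm (perp (b ` {..<0}) x)" using gb_min[of 0 x] x by simp
  then show ?thesis unfolding gs_def by (simp add: p)
qed

lemma gb_G2: "j < CARD('n) \<Longrightarrow> norm (b j) \<le> norm (gs b j) + (\<Sum>l<j. norm (b l))"
  using gb_red[of j] norm_reduced by blast

lemma gb_G1:
  assumes i: "Suc i < CARD('n)"
  shows "norm (gs b i) \<le> 2 * norm (gs b (Suc i))"
proof -
  let ?V = "b ` {..<i}" and ?V' = "b ` {..<Suc i}"
  let ?s = "gs b i" and ?s' = "gs b (Suc i)"
  have i0: "i < CARD('n)" using i by simp
  have VV': "?V' = insert (b i) ?V" by (simp add: lessThan_Suc)
  have spV: "span ?V \<subseteq> span ?V'" by (rule span_mono) auto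
  obtain \<mu> where mu: "(b (Suc i) - ?s') - \<mu> *\<^sub>R b i \<in> span ?V"
    using perp_span[of "b (Suc i)" ?V'] VV' span_breakdown_eq unfolding gs_def by metis
  define k where "k = round \<mu>"
  define x where "x = b (Suc i) - of_int k *\<^sub>R b i"
  have xL: "x \<in> L" unfolding x_def using lat_diff[OF L gb_L[OF i] lat_int[OF L gb_L[OF i0]]] .
  have ps': "perp ?V ?s' = ?s'" unfolding gs_def
    by (rule perp_self) (use perp_orth spV in blast)
  have "b (Suc i) = ((b (Suc i) - ?s') - \<mu> *\<^sub>R b i) + (\<mu> *\<^sub>R b i + ?s')" by simp
  then have "perp ?V (b (Suc i)) = perp ?V (\<mu> *\<^sub>R b i + ?s')"
    using perp_add_span[OF mu, of "\<mu> *\<^sub>R b i + ?s'"] by (simp add: add.commute)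
  also have "\<dots> = \<mu> *\<^sub>R ?s + ?s'" by (simp add: perp_add perp_scale ps' gs_def[of b i])
  finally have pb: "perp ?V (b (Suc i)) = \<mu> *\<^sub>R ?s + ?s'" .
  have px: "perp ?V x = ?s' + (\<mu> - of_int k) *\<^sub>R ?s"
    unfolding x_def perp_diff perp_scale pb by (simp add: gs_def scaleR_diff_left)
  have s_in: "?s \<in> span ?V'"
  proof -
    have "b i - ?s \<in> span ?V'" using perp_span[of "b i" ?V] spV unfolding gs_def by blast
    moreover have "b i \<in> span ?V'" by (rule span_base) simp
    ultimately have "b i - (b i - ?s) \<in> span ?V'" by (rule span_diff[rotated])
    then show ?thesis by simp
  qed
  have orth: "orthogonal ?s' ?s" unfolding gs_def using perp_orth[OF s_in[unfolded gs_def]] .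
  have s'0: "?s' \<noteq> 0" using gb_TI[OF i] perp_zero_iff unfolding gs_def by metis
  have xV: "x \<notin> span ?V"
  proof
    assume "x \<in> span ?V"
    then have "perp ?V x = 0" by (rule perp_in_span)
    then have "?s' = - ((\<mu> - of_int k) *\<^sub>R ?s)" using px by (simp add: eq_neg_iff_add_eq_0)
    then have "?s' \<in> span ?V'" using s_in by (simp add: span_neg span_mul)
    then have "orthogonal ?s' ?s'" unfolding gs_def by (rule perp_orth)
    then show False using s'0 by (simp add: orthogonal_def)
  qed
  have "norm ?s \<le> norm (perp ?V x)" by (rule gb_min[OF i0 xL xV])
  then have A: "(norm ?s)\<^sup>2 \<le> (norm (perp ?V x))\<^sup>2" by (simp add: power_mono)
  have B: "(norm (perp ?V x))\<^sup>2 = (norm ?s')\<^sup>2 + (norm ((\<mu> - of_int k) *\<^sub>R ?s))\<^sup>2"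
    unfolding px by (rule norm_add_Pythagorean) (use orth in \<open>simp add: orthogonal_def\<close>)
  have C: "(norm ((\<mu> - of_int k) *\<^sub>R ?s))\<^sup>2 = (\<mu> - of_int k)\<^sup>2 * (norm ?s)\<^sup>2"
    by (simp add: power_mult_distrib)
  have D: "(\<mu> - of_int k)\<^sup>2 * (norm ?s)\<^sup>2 \<le> (1/4) * (norm ?s)\<^sup>2"
  proof (rule mult_right_mono)
    have "\<bar>\<mu> - of_int k\<bar> \<le> 1/2" unfolding k_def using of_int_round_abs_le[of \<mu>] by (simp add: abs_minus_commute)
    then have "\<bar>\<mu> - of_int k\<bar>\<^sup>2 \<le> (1/2)\<^sup>2" by (rule power_mono) simp
    then show "(\<mu> - of_int k)\<^sup>2 \<le> 1/4" by (simp add: power2_eq_square)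
  qed simp
  have "(norm ?s)\<^sup>2 \<le> 4 * (norm ?s')\<^sup>2" using A B C D zero_le_power2[of "norm ?s'"] by linarith
  then have "(norm ?s)\<^sup>2 \<le> (2 * norm ?s')\<^sup>2" by (simp add: power_mult_distrib)
  then show ?thesis by (rule power2_le_imp_le) simp
qed

lemma gb_K: "i < CARD('n) \<Longrightarrow> j \<le> i \<Longrightarrow> norm (b j) \<le> Kc i * norm (gs b i)"
proof (induction i arbitrary: j)
  case 0
  then show ?case using gb_G2[of 0] by simp
next
  case (Suc i)
  let ?g = "norm (gs b (Suc i))"
  have bnd: "norm (b l) \<le> 2 * Kc i * ?g" if "l \<le> i" for l
  proof -
    have "norm (b l) \<le> Kc i * norm (gs b i)" using Suc.IH[OF _ that] Suc.prems by simp
    also have "\<dots> \<le> Kc i * (2 * ?g)" using gb_G1[OF Suc.prems(1)] Kc_ge1[of i]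
      by (intro mult_left_mono) auto
    finally show ?thesis by simp
  qed
  show ?case
  proof (cases "j \<le> i")
    case True
    have "norm (b j) \<le> 2 * Kc i * ?g" by (rule bnd[OF True])
    also have "\<dots> \<le> Kc (Suc i) * ?g"
    proof (rule mult_right_mono)
      have h: "0 \<le> real i * Kc i" using Kc_ge1[of i] by simp
      have "Kc (Suc i) = 1 + 2 * Kc i + 2 * (real i * Kc i)" by (simp add: algebra_simps)
      then show "2 * Kc i \<le> Kc (Suc i)" using h by linarith
    qed simp
    finally show ?thesis .
  next
    case False
    then have j: "j = Suc i" using Suc.prems by simp
    have "(\<Sum>l<Suc i. norm (b l)) \<le> (\<Sum>l<Suc i. 2 * Kc i * ?g)"
      by (rule sum_mono) (use bnd in auto)
    also have "\<dots> = real (Suc i) * (2 * Kc i * ?g)" by simp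
    finally have "norm (b (Suc i)) \<le> ?g + real (Suc i) * (2 * Kc i * ?g)"
      using gb_G2[OF Suc.prems(1)] by linarith
    also have "\<dots> = Kc (Suc i) * ?g" by (simp add: algebra_simps)
    finally show ?thesis using j by simp
  qed
qed

lemma gb_top:
  assumes D: "\<And>x y. torus_dist L x y \<le> D"
  shows "norm (gs b (CARD('n) - 1)) \<le> 2 * D"
proof -
  define N where "N = CARD('n) - 1"
  have nN: "CARD('n) = Suc N" unfolding N_def by simp
  have N: "N < CARD('n)" using nN by simp
  let ?V = "b ` {..<N}" and ?s = "gs b N"
  define x where "x = (1/2::real) *\<^sub>R ?s"
  have orthV: "inner w ?s = 0" if "w \<in> span ?V" for w
    using perp_orth[OF that, of "b N"] unfolding gs_def orthogonal_def by (simp add: inner_commute)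
  have bNs: "inner (b N) ?s = inner ?s ?s"
  proof -
    have "inner (b N - ?s) ?s = 0" using orthV[OF perp_span[of "b N" ?V]] unfolding gs_def .
    then show ?thesis by (simp add: inner_diff_left)
  qed
  have key: "norm ?s / 2 \<le> dist x y" if yL: "y \<in> L" for y
  proof (cases "?s = 0")
    case True then show ?thesis by simp
  next
    case False
    obtain c where c: "y = (\<Sum>l<CARD('n). of_int (c l) *\<^sub>R b l)"
      using gb_basis yL unfolding lattice_basis_def by auto
    have "inner y ?s = (\<Sum>l<CARD('n). of_int (c l) * inner (b l) ?s)"
      unfolding c by (simp add: inner_sum_left)
    also have "\<dots> = (\<Sum>l<N. of_int (c l) * inner (b l) ?s) + of_int (c N) * inner (b N) ?s"
      unfolding nN by (rule sum.lessThan_Suc)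
    also have "(\<Sum>l<N. of_int (c l) * inner (b l) ?s) = 0"
      by (rule sum.neutral) (auto intro!: orthV span_base)
    finally have iy: "inner y ?s = of_int (c N) * inner ?s ?s" using bNs by simp
    have "inner (x - y) ?s = (1/2 - of_int (c N)) * inner ?s ?s"
      unfolding x_def inner_diff_left iy by (simp add: algebra_simps)
    moreover have h12: "\<bar>1/2 - (of_int (c N) :: real)\<bar> \<ge> 1/2"
    proof (cases "c N \<le> 0")
      case True then show ?thesis by simp
    next
      case False then have "(of_int (c N) :: real) \<ge> 1" by simp
      then show ?thesis by simp
    qed
    ultimately have "\<bar>inner (x - y) ?s\<bar> = \<bar>1/2 - (of_int (c N) :: real)\<bar> * inner ?s ?s"
      by (simp add: abs_mult)
    moreover have "(1/2) * inner ?s ?s \<le> \<bar>1/2 - (of_int (c N) :: real)\<bar> * inner ?s ?s"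
      using mult_right_mono[OF h12 inner_ge_zero] .
    ultimately have "(1/2) * (norm ?s)\<^sup>2 \<le> \<bar>inner (x - y) ?s\<bar>"
      by (simp add: power2_norm_eq_inner)
    also have "\<dots> \<le> norm (x - y) * norm ?s" by (rule Cauchy_Schwarz_ineq2)
    finally have "(1/2) * (norm ?s * norm ?s) \<le> norm (x - y) * norm ?s"
      by (simp add: power2_eq_square)
    then have "norm ?s / 2 \<le> norm (x - y)" using False by simp
    then show ?thesis by (simp add: dist_norm)
  qed
  have ne: "L \<noteq> {}" using lat_zero[OF L] by auto
  have "norm ?s / 2 \<le> infdist x L"
    unfolding infdist_notempty[OF ne] by (rule cINF_greatest[OF ne]) (rule key)
  also have "infdist x L = torus_dist L x 0" unfolding torus_dist_def by simp
  also have "\<dots> \<le> D" by (rule D)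
  finally show ?thesis unfolding N_def by simp
qed

end


lemma ball_measure_pos:
  fixes c :: "'a::euclidean_space"
  assumes "r > 0" shows "measure lebesgue (ball c r) > 0"
proof -
  have "measure lebesgue (ball c r) = measure lborel (ball c r)"
    by (rule measure_completion) simp
  then show ?thesis using content_ball_pos[OF assms] by simp
qed

lemma vol_lower:
  fixes L :: "(real^'n) set" and b :: "nat \<Rightarrow> real^'n"
  assumes L: "is_lattice L" and B: "lattice_basis L b" and lam: "0 < lam"
    and sep: "\<And>x. x \<in> L \<Longrightarrow> x \<noteq> 0 \<Longrightarrow> lam \<le> norm x"
  shows "measure lebesgue (ball (0::real^'n) (lam/2)) \<le>
    measure lebesgue {(\<Sum>j<CARD('n). t j *\<^sub>R b j) | t. \<forall>j<CARD('n). 0 \<le> t j \<and> t j < 1}"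
proof -
  define n where "n = CARD('n)"
  define P where "P = {(\<Sum>j<n. t j *\<^sub>R b j) | t. \<forall>j<n. 0 \<le> t j \<and> t j < 1}"
  have inj: "inj_on b {..<n}" and ind: "independent (b ` {..<n})"
    and LZ: "L = {(\<Sum>j<n. of_int (c j) *\<^sub>R b j) | c. True}"
    using B unfolding lattice_basis_def n_def by auto
  have spanU: "span (b ` {..<n}) = UNIV"
  proof -
    have c: "card (b ` {..<n}) = n" using inj by (simp add: card_image)
    have "UNIV \<subseteq> span (b ` {..<n})"
      using card_eq_dim[of "b ` {..<n}" UNIV] ind c by (simp add: dim_UNIV n_def)
    then show ?thesis by auto
  qed
  have rep: "\<exists>t. x = (\<Sum>j<n. t j *\<^sub>R b j)" for x
    using span_image_rep[of x b n] spanU by auto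
  obtain h :: "nat \<Rightarrow> 'n" where h: "bij_betw h {..<n} UNIV"
    using ex_bij_betw_nat_finite[of "UNIV :: 'n set"] unfolding n_def by (auto simp: lessThan_atLeast0)
  define hi where "hi = inv_into {..<n} h"
  have hih: "\<And>j. j < n \<Longrightarrow> hi (h j) = j" unfolding hi_def using h
    by (simp add: bij_betw_inv_into_left)
  define F0 where "F0 y = (\<Sum>j<n. (y $ h j) *\<^sub>R b j)" for y :: "real^'n"
  have linF0: "linear F0"
    by (rule linearI) (simp_all add: F0_def scaleR_add_left sum.distrib scaleR_sum_right)
  have F0vec: "F0 (\<chi> i. t (hi i)) = (\<Sum>j<n. t j *\<^sub>R b j)" for t
    unfolding F0_def by (rule sum.cong) (auto simp: hih)
  have surjF0: "surj F0"
  proof -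
    have "x \<in> range F0" for x
    proof -
      obtain t where "x = (\<Sum>j<n. t j *\<^sub>R b j)" using rep by blast
      then show ?thesis using F0vec[of t] by (metis rangeI)
    qed
    then show ?thesis by auto
  qed
  have injF0: "inj F0" by (rule linear_surj_imp_inj[OF linF0 surjF0])
  obtain g where g: "linear g" "g \<circ> F0 = id"
    using linear_injective_left_inverse[OF linF0 injF0] by blast
  have gF: "g (F0 y) = y" for y using g(2) by (metis comp_apply id_apply)
  have Fg: "F0 (g x) = x" for x using surjF0 gF by (metis surj_f_inv_f)
  have Pchar: "P = {x. \<forall>j<n. 0 \<le> g x $ h j \<and> g x $ h j < 1}"
  proof (intro set_eqI iffI)
    fix x assume "x \<in> P"
    then obtain t where t: "x = (\<Sum>j<n. t j *\<^sub>R b j)" "\<forall>j<n. 0 \<le> t j \<and> t j < 1"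
      unfolding P_def by blast
    have "g x = (\<chi> i. t (hi i))" using t(1) F0vec[of t] gF by metis
    then show "x \<in> {x. \<forall>j<n. 0 \<le> g x $ h j \<and> g x $ h j < 1}" using t(2) hih by auto
  next
    fix x assume x: "x \<in> {x. \<forall>j<n. 0 \<le> g x $ h j \<and> g x $ h j < 1}"
    have "x = (\<Sum>j<n. (g x $ h j) *\<^sub>R b j)" using Fg[of x] unfolding F0_def by simp
    then show "x \<in> P" unfolding P_def using x
      by (intro CollectI exI[of _ "\<lambda>j. g x $ h j"]) auto
  qed
  have contg: "continuous_on UNIV (\<lambda>x. g x $ k)" for k
  proof -
    have "bounded_linear g" using g(1) linear_conv_bounded_linear by blast
    then have "bounded_linear (\<lambda>x. g x $ k)"
      using bounded_linear_compose[OF bounded_linear_vec_nth] by blast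
    then show ?thesis by (rule linear_continuous_on)
  qed
  have n0: "0 < n" unfolding n_def by simp
  have Psets: "P \<in> sets lebesgue"
  proof -
    have eq: "P = (\<Inter>j\<in>{..<n}. {x. 0 \<le> g x $ h j} \<inter> {x. g x $ h j < 1})"
      unfolding Pchar by auto
    have "{x. (0::real) \<le> g x $ h j} \<in> sets lebesgue" for j
    proof -
      have "closed {x. (\<lambda>x. 0::real) x \<le> g x $ h j}"
        by (rule closed_Collect_le) (simp_all add: contg)
      then have "{x. (0::real) \<le> g x $ h j} \<in> sets lborel" by (simp add: borel_closed)
      then show ?thesis by (rule sets_completionI_sets)
    qed
    moreover have "{x. g x $ h j < (1::real)} \<in> sets lebesgue" for j
    proof -
      have "open {x. g x $ h j < (\<lambda>x. 1::real) x}"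
        by (rule open_Collect_less) (simp_all add: contg)
      then have "{x. g x $ h j < (1::real)} \<in> sets lborel" by (simp add: borel_open)
      then show ?thesis by (rule sets_completionI_sets)
    qed
    ultimately show ?thesis unfolding eq
      by (intro sets.finite_INT) (use n0 in auto)
  qed
  define M where "M = (\<Sum>j<n. norm (b j))"
  have Pbnd: "norm p \<le> M" if pP: "p \<in> P" for p
  proof -
    obtain t where t: "p = (\<Sum>j<n. t j *\<^sub>R b j)" "\<forall>j<n. 0 \<le> t j \<and> t j < 1"
      using pP unfolding P_def by blast
    have "norm p \<le> (\<Sum>j<n. norm (t j *\<^sub>R b j))" unfolding t(1) by (rule norm_sum)
    also have "\<dots> \<le> M" unfolding M_def
    proof (rule sum_mono)
      fix j assume "j \<in> {..<n}"
      then have "\<bar>t j\<bar> \<le> 1" using t(2) by auto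
      then show "norm (t j *\<^sub>R b j) \<le> norm (b j)" by (simp add: mult_left_le_one_le)
    qed
    finally show ?thesis .
  qed
  have Plm: "P \<in> lmeasurable"
  proof (rule bounded_set_imp_lmeasurable[OF _ Psets])
    show "bounded P" unfolding bounded_iff using Pbnd by blast
  qed
  define A where "A = ball (0::real^'n) (lam/2)"
  have cover: "\<exists>l\<in>L. x - l \<in> P" for x
  proof -
    obtain t where t: "x = (\<Sum>j<n. t j *\<^sub>R b j)" using rep by blast
    define l where "l = (\<Sum>j<n. of_int (floor (t j)) *\<^sub>R b j)"
    have lL: "l \<in> L" unfolding LZ l_def by (intro CollectI exI[of _ "\<lambda>j. floor (t j)"]) simp
    have "x - l = (\<Sum>j<n. (t j - of_int (floor (t j))) *\<^sub>R b j)"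
      unfolding t l_def by (simp add: sum_subtractf scaleR_diff_left)
    moreover have "\<forall>j<n. 0 \<le> t j - of_int (floor (t j)) \<and> t j - of_int (floor (t j)) < 1"
      by linarith
    ultimately have "x - l \<in> P" unfolding P_def
      by (intro CollectI exI[of _ "\<lambda>j. t j - of_int (floor (t j))"]) simp
    then show ?thesis using lL by blast
  qed
  define Fs where "Fs = {l \<in> L. \<exists>x\<in>A. x - l \<in> P}"
  have finFs: "finite Fs"
  proof (rule finite_subset[OF _ lat_finite[OF L, of "lam/2 + M"]])
    show "Fs \<subseteq> L \<inter> cball 0 (lam / 2 + M)"
    proof
      fix l assume "l \<in> Fs"
      then obtain x where x: "l \<in> L" "x \<in> A" "x - l \<in> P" unfolding Fs_def by blast
      have "norm l \<le> norm x + norm (x - l)" using norm_triangle_ineq4[of x "x - l"] by simp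
      moreover have "norm x < lam/2" using x(2) unfolding A_def by simp
      moreover have "norm (x - l) \<le> M" using Pbnd x(3) by blast
      ultimately show "l \<in> L \<inter> cball 0 (lam / 2 + M)" using x(1) by simp
    qed
  qed
  define pc where "pc l = A \<inter> ((+) l ` P)" for l
  define C where "C l = (\<lambda>x. x - l) ` pc l" for l
  have Alm: "A \<in> lmeasurable" unfolding A_def by simp
  have pclm: "pc l \<in> lmeasurable" for l
    unfolding pc_def by (rule fmeasurable_Int_fmeasurable[OF Alm fmeasurableD[OF measurable_translation[OF Plm]]])
  have Clm: "C l \<in> lmeasurable" for l unfolding C_def by (rule measurable_translation_subtract[OF pclm])
  have mC: "measure lebesgue (C l) = measure lebesgue (pc l)" for l
    unfolding C_def by (rule measure_translation_subtract)
  have AU: "A \<subseteq> (\<Union>l\<in>Fs. pc l)"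
  proof
    fix x assume xA: "x \<in> A"
    obtain l where l: "l \<in> L" "x - l \<in> P" using cover by blast
    have "x = l + (x - l)" by simp
    then have "x \<in> pc l" unfolding pc_def using xA l(2) by blast
    moreover have "l \<in> Fs" unfolding Fs_def using l xA by blast
    ultimately show "x \<in> (\<Union>l\<in>Fs. pc l)" by blast
  qed
  have "measure lebesgue A \<le> measure lebesgue (\<Union>l\<in>Fs. pc l)"
    by (rule measure_mono_fmeasurable[OF AU fmeasurableD[OF Alm]])
       (rule fmeasurable.finite_UN[OF finFs pclm])
  also have "\<dots> \<le> (\<Sum>l\<in>Fs. measure lebesgue (pc l))"
    by (rule measure_UNION_le[OF finFs]) (use pclm in \<open>blast intro: fmeasurableD\<close>)
  also have "\<dots> = (\<Sum>l\<in>Fs. measure lebesgue (C l))" by (simp add: mC)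
  also have "\<dots> = measure lebesgue (\<Union>l\<in>Fs. C l)"
  proof (rule measure_UNION'[symmetric, OF finFs Clm])
    show "pairwise (\<lambda>i j. disjnt (C i) (C j)) Fs"
    proof (intro pairwiseI)
      fix l l' assume ll: "l \<in> Fs" "l' \<in> Fs" "l \<noteq> l'"
      show "disjnt (C l) (C l')"
      proof (unfold disjnt_def, rule equals0I)
        fix y assume "y \<in> C l \<inter> C l'"
        then have y: "y \<in> C l" "y \<in> C l'" by auto
        have y1: "y + l \<in> A" using y(1) unfolding C_def pc_def by (auto simp: add.commute)
        have y2: "y + l' \<in> A" using y(2) unfolding C_def pc_def by (auto simp: add.commute)
        have "l - l' \<in> L" using lat_diff[OF L] ll unfolding Fs_def by blast
        moreover have "l - l' \<noteq> 0" using ll by simp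
        ultimately have "lam \<le> norm (l - l')" by (rule sep)
        moreover have "norm (l - l') < lam"
        proof -
          have "l - l' = (y + l) - (y + l')" by simp
          then have "norm (l - l') \<le> norm (y + l) + norm (y + l')"
            using norm_triangle_ineq4 by metis
          moreover have "norm (y + l) < lam/2" "norm (y + l') < lam/2"
            using y1 y2 unfolding A_def by auto
          ultimately show ?thesis by linarith
        qed
        ultimately show False by linarith
      qed
    qed
  qed
  also have "\<dots> \<le> measure lebesgue P"
  proof (rule measure_mono_fmeasurable[OF _ _ Plm])
    show "(\<Union>l\<in>Fs. C l) \<subseteq> P" unfolding C_def pc_def by auto
    show "(\<Union>l\<in>Fs. C l) \<in> sets lebesgue"
      by (rule fmeasurableD[OF fmeasurable.finite_UN[OF finFs Clm]])
  qed
  finally show ?thesis unfolding A_def P_def n_def .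
qed


lemma subseq_conv:
  fixes f :: "nat \<Rightarrow> nat \<Rightarrow> real^'n" and N :: nat
  assumes "\<And>k j. j < N \<Longrightarrow> norm (f k j) \<le> B"
  shows "\<exists>r \<beta>. strict_mono r \<and> (\<forall>j<N. (\<lambda>k. f (r k) j) \<longlonglongrightarrow> \<beta> j)"
  using assms
proof (induction N)
  case 0
  show ?case by (intro exI[of _ id]) (auto simp: strict_mono_def)
next
  case (Suc N)
  obtain r \<beta> where r: "strict_mono r" "\<forall>j<N. (\<lambda>k. f (r k) j) \<longlonglongrightarrow> \<beta> j"
    using Suc by (meson less_SucI)
  have "bounded (range (\<lambda>k. f (r k) N))"
    unfolding bounded_iff using Suc.prems[of N] by blast
  then obtain l r2 where r2: "strict_mono r2" "((\<lambda>k. f (r k) N) \<circ> r2) \<longlonglongrightarrow> l"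
    using bounded_imp_convergent_subsequence by blast
  have "\<forall>j<Suc N. (\<lambda>k. f ((r \<circ> r2) k) j) \<longlonglongrightarrow> (\<beta>(N := l)) j"
  proof (intro allI impI)
    fix j assume "j < Suc N"
    then consider "j < N" | "j = N" by linarith
    then show "(\<lambda>k. f ((r \<circ> r2) k) j) \<longlonglongrightarrow> (\<beta>(N := l)) j"
    proof cases
      case 1
      have "((\<lambda>k. f (r k) j) \<circ> r2) \<longlonglongrightarrow> \<beta> j" using LIMSEQ_subseq_LIMSEQ r(2) 1 r2(1) by blast
      then show ?thesis using 1 by (simp add: o_def)
    next
      case 2
      then show ?thesis using r2(2) by (simp add: o_def)
    qed
  qed
  moreover have "strict_mono (r \<circ> r2)" using r(1) r2(1) by (rule strict_mono_o)
  ultimately show ?case by blast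
qed

lemma basis_rev:
  fixes L :: "(real^'n) set" and b :: "nat \<Rightarrow> real^'n"
  assumes B: "lattice_basis L b"
  shows "lattice_basis L (\<lambda>j. b (CARD('n) - Suc j))"
proof -
  define n where "n = CARD('n)"
  have inj: "inj_on b {..<n}" and ind: "independent (b ` {..<n})"
    and LZ: "L = {(\<Sum>j<n. of_int (c j) *\<^sub>R b j) | c. True}"
    using B unfolding lattice_basis_def n_def by auto
  have im: "(\<lambda>j. n - Suc j) ` {..<n} = {..<n}"
  proof
    show "(\<lambda>j. n - Suc j) ` {..<n} \<subseteq> {..<n}" by auto
    show "{..<n} \<subseteq> (\<lambda>j. n - Suc j) ` {..<n}"
    proof
      fix i assume "i \<in> {..<n}"
      then have "i = n - Suc (n - Suc i)" "n - Suc i \<in> {..<n}" by auto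
      then show "i \<in> (\<lambda>j. n - Suc j) ` {..<n}" by blast
    qed
  qed
  have injr: "inj_on (\<lambda>j. n - Suc j) {..<n}" by (rule inj_onI) auto
  have im2: "(\<lambda>j. b (n - Suc j)) ` {..<n} = b ` {..<n}"
    using im by (metis image_image)
  have inj2: "inj_on (\<lambda>j. b (n - Suc j)) {..<n}"
    using comp_inj_on[OF injr, of b] inj im by (simp add: o_def)
  have sr: "(\<Sum>j<n. of_int (c j) *\<^sub>R b (n - Suc j)) = (\<Sum>j<n. of_int (c (n - Suc j)) *\<^sub>R b j)" for c :: "nat \<Rightarrow> int"
  proof -
    have "(\<Sum>j<n. of_int (c (n - Suc j)) *\<^sub>R b j) =
          (\<Sum>j<n. of_int (c (n - Suc (n - Suc j))) *\<^sub>R b (n - Suc j))"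
      by (rule sum.nat_diff_reindex[symmetric])
    also have "\<dots> = (\<Sum>j<n. of_int (c j) *\<^sub>R b (n - Suc j))"
      by (rule sum.cong) auto
    finally show ?thesis by simp
  qed
  have "L = {(\<Sum>j<n. of_int (c j) *\<^sub>R b (n - Suc j)) | c. True}"
  proof -
    have "{(\<Sum>j<n. of_int (c j) *\<^sub>R b (n - Suc j)) | c. True} = {(\<Sum>j<n. of_int (c j) *\<^sub>R b j) | c. True}"
    proof (intro set_eqI iffI)
      fix x assume "x \<in> {(\<Sum>j<n. of_int (c j) *\<^sub>R b (n - Suc j)) | c. True}"
      then obtain c where "x = (\<Sum>j<n. of_int (c j) *\<^sub>R b (n - Suc j))" by blast
      then have "x = (\<Sum>j<n. of_int (c (n - Suc j)) *\<^sub>R b j)" using sr by simp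
      then show "x \<in> {(\<Sum>j<n. of_int (c j) *\<^sub>R b j) | c. True}"
        by (intro CollectI exI[of _ "\<lambda>j. c (n - Suc j)"]) simp
    next
      fix x assume "x \<in> {(\<Sum>j<n. of_int (c j) *\<^sub>R b j) | c. True}"
      then obtain c where c: "x = (\<Sum>j<n. of_int (c j) *\<^sub>R b j)" by blast
      have "(\<Sum>j<n. of_int ((\<lambda>j. c (n - Suc j)) j) *\<^sub>R b (n - Suc j)) = (\<Sum>j<n. of_int (c (n - Suc (n - Suc j))) *\<^sub>R b j)"
        by (rule sr)
      also have "\<dots> = (\<Sum>j<n. of_int (c j) *\<^sub>R b j)" by (rule sum.cong) auto
      finally have "x = (\<Sum>j<n. of_int ((\<lambda>j. c (n - Suc j)) j) *\<^sub>R b (n - Suc j))" using c by simp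
      then show "x \<in> {(\<Sum>j<n. of_int (c j) *\<^sub>R b (n - Suc j)) | c. True}"
        by (intro CollectI exI[of _ "\<lambda>j. c (n - Suc j)"]) simp
    qed
    then show ?thesis using LZ by simp
  qed
  then show ?thesis unfolding lattice_basis_def n_def[symmetric] using inj2 im2 ind by simp
qed


theorem mainTheorem18:
  fixes L :: "nat \<Rightarrow> (real^'n) set"
  assumes lat: "\<And>k. is_lattice (L k)"
    and diam: "\<exists>D. \<forall>k x y. torus_dist (L k) x y \<le> D"
    and vol: "(\<lambda>k. torus_volume (L k)) \<longlonglongrightarrow> 0"
  shows "\<exists>r. strict_mono r \<and> (\<exists>m < CARD('n). \<exists>v :: nat \<Rightarrow> nat \<Rightarrow> real^'n.
           (\<forall>k. lattice_basis (L (r k)) (v k)) \<and>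
           (1 \<le> m \<longrightarrow> (\<exists>w. (\<forall>j<m. (\<lambda>k. v k j) \<longlonglongrightarrow> w j) \<and>
                              inj_on w {..<m} \<and> independent (w ` {..<m}))) \<and>
           (\<forall>j. m \<le> j \<and> j < CARD('n) \<longrightarrow> (\<lambda>k. v k j) \<longlonglongrightarrow> 0))"
proof -
  define n where "n = CARD('n)"
  have n0: "0 < n" unfolding n_def by simp
  obtain D where D: "\<And>k x y. torus_dist (L k) x y \<le> D" using diam by blast
  define bb where "bb k = (SOME b. \<forall>j<CARD('n). good (L k) b j)" for k
  have Gb: "\<And>j. j < CARD('n) \<Longrightarrow> good (L k) (bb k) j" for k
    using someI_ex[OF exists_good[OF lat[of k]]] unfolding bb_def by blast
  define K where "K = Kc (n - 1) * (2 * D)"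
  have bnd: "norm (bb k j) \<le> K" if "j < n" for k j
  proof -
    have "norm (bb k j) \<le> Kc (n - 1) * norm (gs (bb k) (n - 1))"
      using gb_K[OF lat Gb, of "n - 1" j] that n0 unfolding n_def by simp
    also have "\<dots> \<le> Kc (n - 1) * (2 * D)"
      using gb_top[OF lat Gb D] Kc_ge1[of "n - 1"] unfolding n_def
      by (intro mult_left_mono) auto
    finally show ?thesis unfolding K_def .
  qed
  obtain r \<beta> where r: "strict_mono r" and conv: "\<And>j. j < n \<Longrightarrow> (\<lambda>k. bb (r k) j) \<longlonglongrightarrow> \<beta> j"
    using subseq_conv[of n bb K] bnd by blast
  define c where "c k = bb (r k)" for k
  have Gc: "\<And>j. j < CARD('n) \<Longrightarrow> good (L (r k)) (c k) j" for k
    unfolding c_def by (rule Gb)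
  have convc: "\<And>j. j < n \<Longrightarrow> (\<lambda>k. c k j) \<longlonglongrightarrow> \<beta> j" unfolding c_def by (rule conv)
  have zdown: "\<beta> j = 0" if i: "i < n" and bi: "\<beta> i = 0" and ji: "j \<le> i" for i j
  proof -
    have ci: "(\<lambda>k. c k i) \<longlonglongrightarrow> 0" using convc[OF i] bi by simp
    have lim: "(\<lambda>k. Kc i * norm (c k i)) \<longlonglongrightarrow> 0"
      using tendsto_mult_right_zero[OF tendsto_norm_zero[OF ci]] .
    have le: "norm (c k j) \<le> Kc i * norm (c k i)" for k
    proof -
      have "norm (c k j) \<le> Kc i * norm (gs (c k) i)"
        using gb_K[OF lat Gc, of i j] i ji unfolding n_def by simp
      also have "\<dots> \<le> Kc i * norm (c k i)"
        using Kc_ge1[of i] norm_perp_le unfolding gs_def by (intro mult_left_mono) auto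
      finally show ?thesis .
    qed
    have "(\<lambda>k. c k j) \<longlonglongrightarrow> 0"
      by (rule Lim_null_comparison[OF always_eventually lim]) (use le in blast)
    moreover have "(\<lambda>k. c k j) \<longlonglongrightarrow> \<beta> j" using convc ji i by simp
    ultimately show ?thesis using LIMSEQ_unique by blast
  qed
  have b0: "\<beta> 0 = 0"
  proof (rule ccontr)
    assume nz: "\<beta> 0 \<noteq> 0"
    define lam where "lam = norm (\<beta> 0) / 2"
    have lam0: "0 < lam" unfolding lam_def using nz by simp
    define mu where "mu = measure lebesgue (ball (0::real^'n) (lam/2))"
    have mu0: "0 < mu" unfolding mu_def using ball_measure_pos lam0 by simp
    have "(\<lambda>k. norm (c k 0)) \<longlonglongrightarrow> norm (\<beta> 0)" using tendsto_norm[OF convc[OF n0]] .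
    then have ev1: "eventually (\<lambda>k. lam < norm (c k 0)) sequentially"
      using lam0 unfolding lam_def by (intro order_tendstoD(1)) auto
    have "(\<lambda>k. torus_volume (L (r k))) \<longlonglongrightarrow> 0"
      using LIMSEQ_subseq_LIMSEQ[OF vol r] by (simp add: o_def)
    then have ev2: "eventually (\<lambda>k. torus_volume (L (r k)) < mu) sequentially"
      using mu0 by (intro order_tendstoD(2)) auto
    have "mu \<le> torus_volume (L (r k))" if lk: "lam < norm (c k 0)" for k
    proof -
      have B: "lattice_basis (L (r k)) (c k)" by (rule gb_basis[OF lat Gc])
      define b' where "b' = (SOME b. lattice_basis (L (r k)) b)"
      have B': "lattice_basis (L (r k)) b'" unfolding b'_def by (rule someI[of "lattice_basis (L (r k))" "c k", OF B])
      have sep: "lam \<le> norm x" if "x \<in> L (r k)" "x \<noteq> 0" for x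
        using gb_shortest[OF lat Gc that] lk by simp
      have "mu \<le> measure lebesgue {(\<Sum>j<CARD('n). t j *\<^sub>R b' j) | t. \<forall>j<CARD('n). 0 \<le> t j \<and> t j < 1}"
        unfolding mu_def by (rule vol_lower[OF lat B' lam0 sep])
      then show ?thesis unfolding torus_volume_def Let_def b'_def by simp
    qed
    then have "eventually (\<lambda>k. mu \<le> torus_volume (L (r k))) sequentially"
      using ev1 by (rule eventually_mono[rotated]) blast
    with ev2 have "eventually (\<lambda>k. False) sequentially"
      by (rule eventually_elim2) auto
    then show False by simp
  qed
  have indep: "\<beta> i \<notin> span (\<beta> ` {..<i})" if i: "i < n" and bi: "\<beta> i \<noteq> 0" for i
  proof
    assume "\<beta> i \<in> span (\<beta> ` {..<i})"
    then obtain t where t: "\<beta> i = (\<Sum>l<i. t l *\<^sub>R \<beta> l)" using span_image_rep by blast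
    define x where "x k = c k i - (\<Sum>l<i. t l *\<^sub>R c k l)" for k
    have "(\<lambda>k. x k) \<longlonglongrightarrow> \<beta> i - (\<Sum>l<i. t l *\<^sub>R \<beta> l)"
      unfolding x_def using i
      by (intro tendsto_diff tendsto_sum tendsto_scaleR tendsto_const convc) auto
    then have x0: "(\<lambda>k. x k) \<longlonglongrightarrow> 0" using t by simp
    have le: "norm (c k i) \<le> Kc i * norm (x k)" for k
    proof -
      have "gs (c k) i = perp (c k ` {..<i}) (x k)"
        unfolding gs_def x_def by (simp add: perp_diff_span[OF sum_in_span])
      then have "norm (gs (c k) i) \<le> norm (x k)" using norm_perp_le by metis
      moreover have "norm (c k i) \<le> Kc i * norm (gs (c k) i)"
        using gb_K[OF lat Gc, of i i] i unfolding n_def by simp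
      ultimately show ?thesis using Kc_ge1[of i]
        by (meson mult_left_mono order_trans zero_le_one order.trans)
    qed
    have lim: "(\<lambda>k. Kc i * norm (x k)) \<longlonglongrightarrow> 0"
      using tendsto_mult_right_zero[OF tendsto_norm_zero[OF x0]] .
    have "(\<lambda>k. c k i) \<longlonglongrightarrow> 0"
      by (rule Lim_null_comparison[OF always_eventually lim]) (use le in blast)
    then have "\<beta> i = 0" using convc[OF i] LIMSEQ_unique by blast
    then show False using bi by simp
  qed
  define m0 where "m0 = (LEAST j. j = n \<or> (j < n \<and> \<beta> j \<noteq> 0))"
  have m0n: "m0 \<le> n" unfolding m0_def by (rule Least_le) simp
  have m0P: "m0 = n \<or> (m0 < n \<and> \<beta> m0 \<noteq> 0)" unfolding m0_def by (rule LeastI[of _ n]) simp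
  have below: "\<beta> j = 0" if "j < m0" for j
  proof -
    have "\<not> (j = n \<or> (j < n \<and> \<beta> j \<noteq> 0))" using not_less_Least[OF that[unfolded m0_def]] .
    then show ?thesis using that m0n by auto
  qed
  have above: "\<beta> j \<noteq> 0" if "m0 \<le> j" "j < n" for j
  proof
    assume "\<beta> j = 0"
    then have "\<beta> m0 = 0" using zdown[OF that(2)] that(1) by blast
    then show False using m0P that by auto
  qed
  have m01: "1 \<le> m0"
  proof (rule ccontr)
    assume "\<not> 1 \<le> m0"
    then have "m0 = 0" by simp
    then show False using above[of 0] n0 b0 by simp
  qed
  define m where "m = n - m0"
  define v where "v k j = c k (n - Suc j)" for k j
  have mn: "m < n" unfolding m_def using m01 m0n n0 by simp
  have vb: "lattice_basis (L (r k)) (v k)" for k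
    unfolding v_def n_def using basis_rev[OF gb_basis[OF lat Gc]] .
  have part1: "1 \<le> m \<longrightarrow> (\<exists>w. (\<forall>j<m. (\<lambda>k. v k j) \<longlonglongrightarrow> w j) \<and> inj_on w {..<m} \<and> independent (w ` {..<m}))"
  proof
    define w where "w j = \<beta> (n - Suc j)" for j
    have lim: "\<forall>j<m. (\<lambda>k. v k j) \<longlonglongrightarrow> w j"
      unfolding v_def w_def
    proof (intro allI impI)
      fix j assume "j < m"
      show "(\<lambda>k. c k (n - Suc j)) \<longlonglongrightarrow> \<beta> (n - Suc j)" by (rule convc) (use n0 in simp)
    qed
    have im: "(\<lambda>j. n - Suc j) ` {..<m} = {m0..<n}"
    proof
      show "(\<lambda>j. n - Suc j) ` {..<m} \<subseteq> {m0..<n}" unfolding m_def using m0n by auto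
      show "{m0..<n} \<subseteq> (\<lambda>j. n - Suc j) ` {..<m}"
      proof
        fix i assume i: "i \<in> {m0..<n}"
        then have "i = n - Suc (n - Suc i)" "n - Suc i \<in> {..<m}" unfolding m_def by auto
        then show "i \<in> (\<lambda>j. n - Suc j) ` {..<m}" by blast
      qed
    qed
    have TI: "independent (\<beta> ` {m0..<n}) \<and> inj_on \<beta> {m0..<n}"
    proof (rule TI_ind)
      fix j assume j: "m0 \<le> j" "j < n"
      have "\<beta> j \<notin> span (\<beta> ` {..<j})" by (rule indep[OF j(2) above[OF j]])
      moreover have "span (\<beta> ` {m0..<j}) \<subseteq> span (\<beta> ` {..<j})" by (rule span_mono) auto
      ultimately show "\<beta> j \<notin> span (\<beta> ` {m0..<j})" by blast
    qed
    have wim: "w ` {..<m} = \<beta> ` {m0..<n}" unfolding w_def using im by (metis image_image)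
    have injr: "inj_on (\<lambda>j. n - Suc j) {..<m}" by (rule inj_onI) (auto simp: m_def)
    have "inj_on w {..<m}" unfolding w_def
      using comp_inj_on[OF injr, of \<beta>] TI im by (simp add: o_def)
    then show "\<exists>w. (\<forall>j<m. (\<lambda>k. v k j) \<longlonglongrightarrow> w j) \<and> inj_on w {..<m} \<and> independent (w ` {..<m})"
      using lim TI wim by auto
  qed
  have part2: "\<forall>j. m \<le> j \<and> j < CARD('n) \<longrightarrow> (\<lambda>k. v k j) \<longlonglongrightarrow> 0"
  proof (intro allI impI)
    fix j assume j: "m \<le> j \<and> j < CARD('n)"
    then have "m \<le> j" "j < n" unfolding n_def by auto
    then have "n - Suc j < m0" unfolding m_def using m0n by arith
    then have "\<beta> (n - Suc j) = 0" by (rule below)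
    moreover have "(\<lambda>k. c k (n - Suc j)) \<longlonglongrightarrow> \<beta> (n - Suc j)" by (rule convc) (use n0 in simp)
    ultimately show "(\<lambda>k. v k j) \<longlonglongrightarrow> 0" unfolding v_def by simp
  qed
  show ?thesis
    using r mn vb part1 part2 unfolding n_def by blast
qed


end
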